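(* There is an absolute constant $C>0$ such that for all integers $k\ge 1$ and $r\ge 1$, \[ \sum_{a_1,\dots,a_r=1}^k \frac{|\mathscr{L}^*(\mathbf{a})|}{a_1\cdots a_r} \le C\,(2h_k)^r\, r!\int_{\Omega_r} \min_{0\le j\le r} 2^{-j}\big(k^{\xi_1}+\cdots+k^{\xi_j}+1\big)\, d\boldsymbol{\xi}, \] where $\mathbf{a}=(a_1,\dots,a_r)$ and $\Omega_r=\{(\xi_1,\dots,\xi_r): 0\le\xi_1\le\xi_2\le\cdots\le\xi_r\le 1\}$.
   Context: $h_k = 1+\frac12+\cdots+\frac1k$ is the $k$-th harmonic number. For a tuple $\mathbf{a}=(a_1,\dots,a_r)$, $\mathscr{L}^*(\mathbf{a}) = \{\sum_{i\in I} a_i : I\subset\{1,\dots,r\}\}$ is its set of subset sums, and $|\cdot|$ denotes cardinality. In the minimum, the term $j=0$ is $1$ (empty sum). *)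

theory Defs
  imports "HOL-Analysis.Analysis"
begin

definition harm :: "nat \<Rightarrow> real" where
  "harm k = (\<Sum>i=1..k. 1 / real i)"

definition subset_sums :: "nat \<Rightarrow> (nat \<Rightarrow> nat) \<Rightarrow> nat set" where
  "subset_sums r a = {(\<Sum>i\<in>I. a i) | I. I \<subseteq> {0..<r}}"

text \<open>Omega_r = {xi : 0 <= xi_1 <= ... <= xi_r <= 1}, coordinates indexed 0..r-1.\<close>
definition Omega :: "nat \<Rightarrow> (nat \<Rightarrow> real) set" where
  "Omega r = {\<xi> \<in> {0..<r} \<rightarrow>\<^sub>E UNIV.
      (\<forall>i<r. 0 \<le> \<xi> i \<and> \<xi> i \<le> 1) \<and> (\<forall>i j. i \<le> j \<and> j < r \<longrightarrow> \<xi> i \<le> \<xi> j)}"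

definition minfun :: "nat \<Rightarrow> nat \<Rightarrow> (nat \<Rightarrow> real) \<Rightarrow> real" where
  "minfun k r \<xi> = Min ((\<lambda>j. (1/2) ^ j * ((\<Sum>i<j. real k powr \<xi> i) + 1)) ` {0..r})"

end

theory Submission
  imports Defs "HOL-Combinatorics.Permutations"
begin


definition gterm :: "(nat \<Rightarrow> real) \<Rightarrow> nat set \<Rightarrow> real" where
  "gterm x S = (1/2) ^ card S * ((\<Sum>i\<in>S. x i) + 1)"

definition G :: "nat \<Rightarrow> (nat \<Rightarrow> real) \<Rightarrow> real" where
  "G r x = Min (gterm x ` Pow {0..<r})"

lemma G_le: "S \<subseteq> {0..<r} \<Longrightarrow> G r x \<le> gterm x S"
  unfolding G_def by (intro Min_le) auto

lemma G_in: "\<exists>S\<subseteq>{0..<r}. G r x = gterm x S"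
proof -
  have "G r x \<in> gterm x ` Pow {0..<r}" unfolding G_def by (intro Min_in) auto
  then show ?thesis by auto
qed

lemma G_cong: "(\<And>i. i < r \<Longrightarrow> x i = y i) \<Longrightarrow> G r x = G r y"
proof -
  assume h: "\<And>i. i < r \<Longrightarrow> x i = y i"
  have "gterm x ` Pow {0..<r} = gterm y ` Pow {0..<r}"
    by (intro image_cong refl) (auto simp: gterm_def intro!: sum.cong h)
  then show ?thesis by (simp add: G_def)
qed

lemma G_perm:
  assumes "\<sigma> permutes {0..<r}"
  shows "G r (x \<circ> \<sigma>) = G r x"
proof -
  have inj: "inj \<sigma>" using assms permutes_inj by blast
  have P: "(\<lambda>S. \<sigma> ` S) ` Pow {0..<r} = Pow {0..<r}"
  proof
    show "(`) \<sigma> ` Pow {0..<r} \<subseteq> Pow {0..<r}" using assms permutes_image by fastforce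
    show "Pow {0..<r} \<subseteq> (`) \<sigma> ` Pow {0..<r}"
    proof
      fix S assume S: "S \<in> Pow {0..<r}"
      have "S = \<sigma> ` (inv \<sigma> ` S)" using assms by (simp add: image_image permutes_inverses(1))
      moreover have "inv \<sigma> ` S \<in> Pow {0..<r}"
        using S permutes_inv[OF assms] permutes_image by fastforce
      ultimately show "S \<in> (`) \<sigma> ` Pow {0..<r}" by blast
    qed
  qed
  have T: "gterm x (\<sigma> ` S) = gterm (x \<circ> \<sigma>) S" for S
    unfolding gterm_def using inj
    by (simp add: card_image sum.reindex inj_on_subset[of \<sigma> UNIV])
  have "gterm x ` Pow {0..<r} = gterm x ` ((\<lambda>S. \<sigma> ` S) ` Pow {0..<r})" using P by simp
  also have "\<dots> = gterm (x \<circ> \<sigma>) ` Pow {0..<r}" by (simp add: image_image T)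
  finally show ?thesis by (simp add: G_def)
qed

lemma card_subset_sums_le:
  assumes S: "S \<subseteq> {0..<r}"
  shows "card (subset_sums r a) \<le> (sum a S + 1) * 2 ^ (r - card S)"
proof -
  let ?R = "(\<lambda>I. sum a I) ` Pow ({0..<r} - S)"
  have sub: "subset_sums r a \<subseteq> (\<lambda>(u,v). u + v) ` ({0..sum a S} \<times> ?R)"
  proof
    fix s assume "s \<in> subset_sums r a"
    then obtain I where I: "I \<subseteq> {0..<r}" "s = sum a I" unfolding subset_sums_def by auto
    have fI: "finite I" using I finite_subset by blast
    have "sum a I = sum a (I \<inter> S) + sum a (I - S)"
      using fI by (metis Diff_Diff_Int Diff_subset finite_Diff sum.subset_diff inf_commute)
    moreover have "sum a (I \<inter> S) \<le> sum a S"
      using S finite_subset by (intro sum_mono2) auto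
    moreover have "I - S \<in> Pow ({0..<r} - S)" using I by auto
    ultimately show "s \<in> (\<lambda>(u,v). u + v) ` ({0..sum a S} \<times> ?R)"
      using I by (intro image_eqI[of _ _ "(sum a (I \<inter> S), sum a (I - S))"]) auto
  qed
  have "card (subset_sums r a) \<le> card ((\<lambda>(u,v). u + v) ` ({0..sum a S} \<times> ?R))"
    by (intro card_mono sub) auto
  also have "\<dots> \<le> card ({0..sum a S} \<times> ?R)" by (intro card_image_le) auto
  also have "\<dots> = (sum a S + 1) * card ?R" by (simp add: card_cartesian_product)
  also have "card ?R \<le> 2 ^ (r - card S)"
  proof -
    have "card ?R \<le> card (Pow ({0..<r} - S))" by (intro card_image_le) auto
    also have "card (Pow ({0..<r} - S)) = 2 ^ (r - card S)"
      using S by (simp add: card_Pow card_Diff_subset finite_subset)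
    finally show ?thesis .
  qed
  then have "(sum a S + 1) * card ?R \<le> (sum a S + 1) * 2 ^ (r - card S)" by (rule mult_left_mono) simp
  finally show ?thesis .
qed

lemma card_le_G:
  "real (card (subset_sums r a)) \<le> 2 ^ r * G r (\<lambda>i. real (a i))"
proof -
  obtain S where S: "S \<subseteq> {0..<r}" "G r (\<lambda>i. real (a i)) = gterm (\<lambda>i. real (a i)) S"
    using G_in by blast
  have cS: "card S \<le> r" using S card_mono[of "{0..<r}" S] by auto
  have "real (card (subset_sums r a)) \<le> real ((sum a S + 1) * 2 ^ (r - card S))"
    using card_subset_sums_le[OF S(1), of a] of_nat_le_iff by blast
  also have "\<dots> = 2 ^ r * gterm (\<lambda>i. real (a i)) S"
  proof -
    have "(2::real) ^ r = 2 ^ (r - card S) * 2 ^ card S" using cS by (simp add: power_add[symmetric])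
    then show ?thesis unfolding gterm_def by (simp add: power_one_over field_simps)
  qed
  finally show ?thesis using S by simp
qed



lemma harm_eq: "Defs.harm n = (Harmonic_Numbers.harm n :: real)"
  unfolding Defs.harm_def Harmonic_Numbers.harm_def by (simp add: divide_inverse)

lemma harm_Suc': "Defs.harm (Suc n) = Defs.harm n + 1 / real (Suc n)"
  unfolding Defs.harm_def by simp

lemma harm_mono': "m \<le> n \<Longrightarrow> Defs.harm m \<le> Defs.harm n"
  unfolding harm_eq by (rule harm_mono)

lemma harm_pos': "k \<ge> 1 \<Longrightarrow> Defs.harm k > 0"
  unfolding harm_eq by (rule harm_pos) simp

lemma harm_nonneg': "Defs.harm k \<ge> 0"
  unfolding harm_eq by (rule harm_nonneg)

lemma harm_ge_ln': "ln (real n + 1) \<le> Defs.harm n"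
  unfolding harm_eq by (rule ln_le_harm)

lemma harm_le_ln: "k \<ge> 1 \<Longrightarrow> Defs.harm k - ln (real k) \<le> 1"
proof -
  assume "k \<ge> 1"
  then obtain n where n: "k = Suc n" by (cases k) auto
  have "Harmonic_Numbers.harm (Suc n) - ln (real (Suc n)) \<le> Harmonic_Numbers.harm (Suc 0) - ln (real (Suc 0))"
    using decseq_harm_diff_ln unfolding decseq_def by (metis zero_le)
  then show ?thesis using n by (simp add: harm_eq harm_expand)
qed

definition tt :: "nat \<Rightarrow> nat \<Rightarrow> real" where
  "tt k m = Defs.harm m / Defs.harm k"

definition J :: "nat \<Rightarrow> nat \<Rightarrow> real set" where
  "J k m = {tt k (m - 1) ..< tt k m}"

definition nu :: "nat \<Rightarrow> real \<Rightarrow> real" where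
  "nu k x = (\<Sum>m\<in>{1..k}. real m * indicator (J k m) x)"

lemma tt_diff: "k \<ge> 1 \<Longrightarrow> m \<ge> 1 \<Longrightarrow> tt k m - tt k (m - 1) = 1 / (real m * Defs.harm k)"
proof -
  assume k: "k \<ge> 1" and m: "m \<ge> 1"
  then obtain n where n: "m = Suc n" by (cases m) auto
  have "Defs.harm (Suc n) - Defs.harm n = 1 / real (Suc n)" by (simp add: harm_Suc')
  then have "(Defs.harm (Suc n) - Defs.harm n) / Defs.harm k = 1 / (real (Suc n) * Defs.harm k)"
    by simp
  then show ?thesis unfolding tt_def n by (simp add: diff_divide_distrib)
qed

lemma J_sets[measurable]: "J k m \<in> sets lborel"
  unfolding J_def by simp

lemma J_measure: "k \<ge> 1 \<Longrightarrow> m \<ge> 1 \<Longrightarrow> emeasure lborel (J k m) = ennreal (1 / (real m * Defs.harm k))"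
proof -
  assume k: "k \<ge> 1" and m: "m \<ge> 1"
  have "1 / (real m * Defs.harm k) > 0" using harm_pos'[OF k] m by simp
  then have "tt k (m - 1) \<le> tt k m" using tt_diff[OF k m] by linarith
  then show ?thesis unfolding J_def using tt_diff[OF k m] by simp
qed

lemma J_sub: "k \<ge> 1 \<Longrightarrow> m \<le> k \<Longrightarrow> J k m \<subseteq> {0..<1}"
proof -
  assume k: "k \<ge> 1" and m: "m \<le> k"
  have "tt k m \<le> 1" using harm_mono'[OF m] harm_pos'[OF k] unfolding tt_def by simp
  moreover have "0 \<le> tt k (m - 1)" unfolding tt_def using harm_nonneg' harm_pos'[OF k] by simp
  ultimately show ?thesis unfolding J_def by auto
qed

lemma J_disj: "k \<ge> 1 \<Longrightarrow> x \<in> J k m \<Longrightarrow> x \<in> J k m' \<Longrightarrow> m \<ge> 1 \<Longrightarrow> m' \<ge> 1 \<Longrightarrow> m = m'"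
proof (rule ccontr)
  assume k: "k \<ge> 1" and x: "x \<in> J k m" "x \<in> J k m'" and m: "m \<ge> 1" "m' \<ge> 1" and ne: "m \<noteq> m'"
  have hk: "Defs.harm k > 0" using harm_pos'[OF k] .
  have mono: "a \<le> b \<Longrightarrow> tt k a \<le> tt k b" for a b
    unfolding tt_def using harm_mono' hk by (simp add: divide_right_mono)
  { fix p q assume p: "x \<in> J k p" and q: "x \<in> J k q" and pq: "p < q"
    have "tt k p \<le> tt k (q - 1)" using pq by (intro mono) simp
    with p q have False unfolding J_def by auto }
  then show False using x ne by (metis linorder_neqE_nat)
qed

lemma nu_eq: "k \<ge> 1 \<Longrightarrow> x \<in> J k m \<Longrightarrow> m \<in> {1..k} \<Longrightarrow> nu k x = real m"
proof -
  assume k: "k \<ge> 1" and x: "x \<in> J k m" and m: "m \<in> {1..k}"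
  have "nu k x = (\<Sum>m'\<in>{1..k}. if m' = m then real m else 0)"
    unfolding nu_def using J_disj[OF k] x m
    by (intro sum.cong refl) (auto simp: indicator_def)
  then show ?thesis using m by simp
qed

lemma nu_cases: "k \<ge> 1 \<Longrightarrow> nu k x = 0 \<or> (\<exists>m\<in>{1..k}. x \<in> J k m \<and> nu k x = real m)"
proof (cases "\<exists>m\<in>{1..k}. x \<in> J k m")
  case True
  assume k: "k \<ge> 1"
  then show ?thesis using True nu_eq[OF k] by blast
next
  case False
  then show ?thesis unfolding nu_def by (auto intro!: sum.neutral simp: indicator_def)
qed

lemma nu_meas[measurable]: "nu k \<in> borel_measurable borel"
  unfolding nu_def J_def by measurable

lemma nu_bound:
  assumes k: "k \<ge> 1" and x: "0 \<le> x"
  shows "nu k x \<le> exp 1 * real k powr x"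
proof -
  have kp: "real k powr x > 0" using k by simp
  consider "nu k x = 0" | m where "m \<in> {1..k}" "x \<in> J k m" "nu k x = real m"
    using nu_cases[OF k] by blast
  then show ?thesis
  proof cases
    case 1 then show ?thesis using kp by simp
  next
    case 2
    let ?h = "Defs.harm k"
    have hk: "?h > 0" using harm_pos'[OF k] .
    have lnm: "ln (real m) \<le> Defs.harm (m - 1)"
      using harm_ge_ln'[of "m - 1"] 2(1) by (simp add: of_nat_diff)
    have lnm0: "0 \<le> ln (real m)" using 2(1) by simp
    have lnmk: "ln (real m) \<le> ln (real k)" using 2(1) by simp
    have lnkh: "ln (real k) \<le> ?h" using harm_ge_ln'[of k] k
      by (smt (verit) ln_le_cancel_iff of_nat_0_less_iff of_nat_1 order_less_le_trans zero_less_one)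
    have hl: "?h - ln (real k) \<le> 1" using harm_le_ln[OF k] .
    have xge: "ln (real m) / ?h \<le> x"
    proof -
      have "ln (real m) / ?h \<le> Defs.harm (m - 1) / ?h" using lnm hk by (intro divide_right_mono) auto
      also have "\<dots> \<le> x" using 2(2) unfolding J_def tt_def by auto
      finally show ?thesis .
    qed
    have key: "ln (real m) * (?h - ln (real k)) \<le> ?h"
    proof -
      have "ln (real m) * (?h - ln (real k)) \<le> ln (real m) * 1"
        using lnm0 hl by (intro mult_left_mono) auto
      then show ?thesis using lnmk lnkh by linarith
    qed
    have "ln (real m) \<le> 1 + ln (real k) * (ln (real m) / ?h)"
      using key hk by (simp add: field_simps)
    also have "\<dots> \<le> 1 + ln (real k) * x"
      using xge k by (intro add_left_mono mult_left_mono) auto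
    finally have "exp (ln (real m)) \<le> exp (1 + ln (real k) * x)" by simp
    then have "real m \<le> exp 1 * exp (ln (real k) * x)"
      using 2(1) by (simp add: exp_add)
    also have "exp (ln (real k) * x) = real k powr x"
      using k by (simp add: powr_def mult.commute)
    finally show ?thesis using 2(3) by simp
  qed
qed




lemma psf: "product_sigma_finite (\<lambda>_::nat. lborel :: real measure)"
  unfolding product_sigma_finite_def using sigma_finite_lborel by simp

abbreviation MM :: "nat \<Rightarrow> (nat \<Rightarrow> real) measure" where
  "MM r \<equiv> (\<Pi>\<^sub>M i\<in>{0..<r}. lborel)"

lemma space_MM: "space (MM r) = {0..<r} \<rightarrow>\<^sub>E UNIV"
  by (simp add: space_PiM)

lemma emeasure_MM_box:
  assumes "\<And>i. i \<in> {0..<r} \<Longrightarrow> A i \<in> sets lborel"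
  shows "emeasure (MM r) (Pi\<^sub>E {0..<r} A) = (\<Prod>i\<in>{0..<r}. emeasure lborel (A i))"
  using product_sigma_finite.emeasure_PiM[OF psf, of "{0..<r}" A] assms by simp

lemma sets_Collect_finite_Ball:
  assumes "finite I" "\<And>i. i \<in> I \<Longrightarrow> {x \<in> space M. P i x} \<in> sets M"
  shows "{x \<in> space M. \<forall>i\<in>I. P i x} \<in> sets M"
proof (cases "I = {}")
  case True then show ?thesis by simp
next
  case False
  then have "{x \<in> space M. \<forall>i\<in>I. P i x} = (\<Inter>i\<in>I. {x \<in> space M. P i x})" by auto
  then show ?thesis using assms False by (auto intro!: sets.finite_INT)
qed

lemma Omega_sets: "Omega r \<in> sets (MM r)"
proof -
  have c: "(\<lambda>\<xi>. \<xi> i) \<in> borel_measurable (MM r)" if "i < r" for i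
    using measurable_component_singleton[of i "{0..<r}" "\<lambda>_. lborel"] that by simp
  have s1: "{\<xi> \<in> space (MM r). 0 \<le> \<xi> i \<and> \<xi> i \<le> 1} \<in> sets (MM r)" if "i < r" for i
    using c[OF that] by measurable
  have s2: "{\<xi> \<in> space (MM r). \<xi> i \<le> \<xi> j} \<in> sets (MM r)" if "i < r" "j < r" for i j
    using c[OF that(1)] c[OF that(2)] by measurable
  have "Omega r = {\<xi> \<in> space (MM r). \<forall>i\<in>{0..<r}. 0 \<le> \<xi> i \<and> \<xi> i \<le> 1} \<inter>
          {\<xi> \<in> space (MM r). \<forall>p\<in>{p \<in> {0..<r} \<times> {0..<r}. fst p \<le> snd p}. \<xi> (fst p) \<le> \<xi> (snd p)}"
    unfolding Omega_def space_MM by auto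
  also have "\<dots> \<in> sets (MM r)"
    using s1 s2 by (intro sets.Int sets_Collect_finite_Ball) auto
  finally show ?thesis .
qed

lemma borel_measurable_Min_img:
  assumes "finite S" "S \<noteq> {}" "\<And>s. s \<in> S \<Longrightarrow> (\<lambda>x. f s x :: real) \<in> borel_measurable N"
  shows "(\<lambda>x. Min ((\<lambda>s. f s x) ` S)) \<in> borel_measurable N"
  using assms
proof (induction S rule: finite_ne_induct)
  case (singleton s) then show ?case by simp
next
  case (insert s S)
  have "(\<lambda>x. Min ((\<lambda>s. f s x) ` insert s S)) = (\<lambda>x. min (f s x) (Min ((\<lambda>s. f s x) ` S)))"
    using insert by (simp add: Min_insert)
  then show ?case using insert by simp
qed

lemma G_meas:
  assumes "\<And>i. i < r \<Longrightarrow> (\<lambda>\<xi>. x \<xi> i) \<in> borel_measurable N"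
  shows "(\<lambda>\<xi>. G r (x \<xi>)) \<in> borel_measurable N"
  unfolding G_def image_image gterm_def
proof (rule borel_measurable_Min_img)
  fix S assume S: "S \<in> Pow {0..<r}"
  have "(\<lambda>\<xi>. \<Sum>i\<in>S. x \<xi> i) \<in> borel_measurable N"
    using S by (intro borel_measurable_sum assms) auto
  then show "(\<lambda>\<xi>. (1/2) ^ card S * (sum (x \<xi>) S + 1)) \<in> borel_measurable N" by simp
qed auto

lemma minfun_meas: "minfun k r \<in> borel_measurable (MM r)"
proof -
  have "minfun k r = (\<lambda>\<xi>. Min ((\<lambda>j. (1/2) ^ j * ((\<Sum>i<j. real k powr \<xi> i) + 1)) ` {0..r}))"
    unfolding minfun_def by simp
  also have "\<dots> \<in> borel_measurable (MM r)"
  proof (rule borel_measurable_Min_img)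
    fix j assume j: "j \<in> {0..r}"
    have "(\<lambda>\<xi>. \<Sum>i<j. real k powr \<xi> i) \<in> borel_measurable (MM r)"
    proof (rule borel_measurable_sum)
      fix i assume "i \<in> {..<j}"
      then have "i \<in> {0..<r}" using j by auto
      then show "(\<lambda>\<xi>. real k powr \<xi> i) \<in> borel_measurable (MM r)" by measurable
    qed
    then show "(\<lambda>\<xi>. (1/2) ^ j * ((\<Sum>i<j. real k powr \<xi> i) + 1)) \<in> borel_measurable (MM r)"
      by measurable
  qed auto
  finally show ?thesis .
qed



lemma sort_perm:
  "\<exists>\<sigma>. \<sigma> permutes {0..<r} \<and> (\<forall>i j. i \<le> j \<and> j < r \<longrightarrow> (\<xi>::nat\<Rightarrow>real) (\<sigma> i) \<le> \<xi> (\<sigma> j))"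
proof -
  define xs where "xs = sort_key \<xi> [0..<r]"
  have len: "length xs = r" unfolding xs_def by simp
  have dist: "distinct xs" unfolding xs_def by simp
  have set: "set xs = {0..<r}" unfolding xs_def by simp
  have sorted: "sorted (map \<xi> xs)" unfolding xs_def by simp
  define \<sigma> where "\<sigma> i = (if i < r then xs ! i else i)" for i
  have "bij_betw \<sigma> {0..<r} {0..<r}"
  proof (rule bij_betw_imageI)
    show "inj_on \<sigma> {0..<r}" unfolding inj_on_def \<sigma>_def
      using dist len by (simp add: nth_eq_iff_index_eq)
    have "\<sigma> ` {0..<r} = (\<lambda>i. xs ! i) ` {0..<r}" unfolding \<sigma>_def by auto
    also have "\<dots> = set xs" using len by (auto simp: in_set_conv_nth)
    finally show "\<sigma> ` {0..<r} = {0..<r}" using set by simp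
  qed
  then have "\<sigma> permutes {0..<r}" by (rule bij_imp_permutes) (simp add: \<sigma>_def)
  moreover have "\<forall>i j. i \<le> j \<and> j < r \<longrightarrow> \<xi> (\<sigma> i) \<le> \<xi> (\<sigma> j)"
    using sorted len unfolding \<sigma>_def
    by (auto simp: sorted_iff_nth_mono)
  ultimately show ?thesis by blast
qed


lemma perm_lt: fixes \<sigma> :: "nat \<Rightarrow> nat" assumes "\<sigma> permutes {0..<r}" "i < r" shows "\<sigma> i < r"
proof -
  have "\<sigma> i \<in> {0..<r}" using permutes_in_image[OF assms(1)] assms(2) by simp
  then show ?thesis by simp
qed

definition TT :: "nat \<Rightarrow> (nat \<Rightarrow> nat) \<Rightarrow> (nat \<Rightarrow> real) \<Rightarrow> (nat \<Rightarrow> real)" where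
  "TT r \<sigma> \<xi> = (\<lambda>i\<in>{0..<r}. \<xi> (\<sigma> i))"

lemma TT_meas:
  assumes "\<sigma> permutes {0..<r}"
  shows "TT r \<sigma> \<in> measurable (MM r) (MM r)"
proof -
  have "(\<lambda>\<xi>. \<lambda>i\<in>{0..<r}. \<xi> (\<sigma> i)) \<in> measurable (MM r) (MM r)"
  proof (rule measurable_restrict)
    fix i assume "i \<in> {0..<r}"
    then have "i < r" by simp
    then have "\<sigma> i < r" by (rule perm_lt[OF assms])
    then have "\<sigma> i \<in> {0..<r}" by simp
    then show "(\<lambda>\<xi>. \<xi> (\<sigma> i)) \<in> measurable (MM r) lborel"
      by (rule measurable_component_singleton)
  qed
  then show ?thesis unfolding TT_def .
qed

lemma TT_pre:
  fixes A :: "nat \<Rightarrow> real set"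
  assumes \<sigma>: "\<sigma> permutes {0..<r}"
  shows "TT r \<sigma> -` Pi\<^sub>E {0..<r} A \<inter> space (MM r) = Pi\<^sub>E {0..<r} (\<lambda>j. A (inv \<sigma> j))"
proof (intro set_eqI iffI)
  have inv: "inv \<sigma> permutes {0..<r}" using permutes_inv[OF \<sigma>] .
  fix \<xi> assume a: "\<xi> \<in> TT r \<sigma> -` Pi\<^sub>E {0..<r} A \<inter> space (MM r)"
  then have ext: "\<xi> \<in> {0..<r} \<rightarrow>\<^sub>E UNIV" by (simp only: space_MM Int_iff)
  have tt: "TT r \<sigma> \<xi> \<in> Pi\<^sub>E {0..<r} A" using a by (simp only: Int_iff vimage_eq)
  show "\<xi> \<in> Pi\<^sub>E {0..<r} (\<lambda>j. A (inv \<sigma> j))"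
  proof (rule PiE_I)
    fix j assume j: "j \<in> {0..<r}"
    have ij: "inv \<sigma> j < r" using j perm_lt[OF inv] by simp
    have "TT r \<sigma> \<xi> (inv \<sigma> j) \<in> A (inv \<sigma> j)" using PiE_mem[OF tt, of "inv \<sigma> j"] ij by simp
    then have "\<xi> (\<sigma> (inv \<sigma> j)) \<in> A (inv \<sigma> j)" using ij by (simp add: TT_def)
    then show "\<xi> j \<in> A (inv \<sigma> j)" using \<sigma> by (simp add: permutes_inverses(1))
  next
    fix j assume "j \<notin> {0..<r}" then show "\<xi> j = undefined" using PiE_arb[OF ext] by simp
  qed
next
  fix \<xi> assume h: "\<xi> \<in> Pi\<^sub>E {0..<r} (\<lambda>j. A (inv \<sigma> j))"
  have "TT r \<sigma> \<xi> \<in> Pi\<^sub>E {0..<r} A"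
    unfolding TT_def
  proof (rule PiE_I)
    fix i assume i: "i \<in> {0..<r}"
    then have si: "\<sigma> i < r" using perm_lt[OF \<sigma>] by simp
    have "\<xi> (\<sigma> i) \<in> A (inv \<sigma> (\<sigma> i))" using PiE_mem[OF h, of "\<sigma> i"] si by simp
    then show "(\<lambda>i\<in>{0..<r}. \<xi> (\<sigma> i)) i \<in> A i" using \<sigma> i by (simp add: permutes_inverses(2))
  qed simp
  moreover have "\<xi> \<in> space (MM r)" unfolding space_MM using h by (auto simp: PiE_iff)
  ultimately show "\<xi> \<in> TT r \<sigma> -` Pi\<^sub>E {0..<r} A \<inter> space (MM r)" by simp
qed

lemma distr_TT:
  assumes \<sigma>: "\<sigma> permutes {0..<r}"
  shows "distr (MM r) (MM r) (TT r \<sigma>) = MM r"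
proof (rule product_sigma_finite.PiM_eqI[OF psf])
  show "finite {0..<r}" by simp
  show "sets (distr (MM r) (MM r) (TT r \<sigma>)) = sets (MM r)" by (rule sets_distr)
  fix A :: "nat \<Rightarrow> real set" assume A: "\<And>i. i \<in> {0..<r} \<Longrightarrow> A i \<in> sets lborel"
  have inv: "inv \<sigma> permutes {0..<r}" using permutes_inv[OF \<sigma>] .
  have pre: "TT r \<sigma> -` Pi\<^sub>E {0..<r} A \<inter> space (MM r) = Pi\<^sub>E {0..<r} (\<lambda>j. A (inv \<sigma> j))"
    by (rule TT_pre[OF \<sigma>])
  have "emeasure (distr (MM r) (MM r) (TT r \<sigma>)) (Pi\<^sub>E {0..<r} A)
        = emeasure (MM r) (TT r \<sigma> -` Pi\<^sub>E {0..<r} A \<inter> space (MM r))"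
    using A TT_meas[OF \<sigma>] by (intro emeasure_distr) (auto intro!: sets_PiM_I_finite)
  also have "\<dots> = (\<Prod>j\<in>{0..<r}. emeasure lborel (A (inv \<sigma> j)))"
    unfolding pre using A perm_lt[OF inv]
    by (intro emeasure_MM_box) simp
  also have "\<dots> = (\<Prod>i\<in>{0..<r}. emeasure lborel (A i))"
    using prod.permute[OF inv, of "\<lambda>i. emeasure lborel (A i)"] by (simp add: comp_def)
  finally show "emeasure (distr (MM r) (MM r) (TT r \<sigma>)) (Pi\<^sub>E {0..<r} A) = (\<Prod>i\<in>{0..<r}. emeasure lborel (A i))" .
qed



definition Cc :: "nat \<Rightarrow> (nat \<Rightarrow> real) set" where
  "Cc r = Pi\<^sub>E {0..<r} (\<lambda>_. {0..<1})"

definition H :: "nat \<Rightarrow> nat \<Rightarrow> (nat \<Rightarrow> real) \<Rightarrow> real" where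
  "H k r \<xi> = indicator (Cc r) \<xi> * G r (\<lambda>i. nu k (\<xi> i))"

lemma Cc_sets: "Cc r \<in> sets (MM r)"
  unfolding Cc_def by (intro sets_PiM_I_finite) auto

lemma H_meas: "H k r \<in> borel_measurable (MM r)"
proof -
  have "(\<lambda>\<xi>. G r (\<lambda>i. nu k (\<xi> i))) \<in> borel_measurable (MM r)"
  proof (rule G_meas)
    fix i assume "i < r"
    then have "(\<lambda>\<xi>. \<xi> i) \<in> borel_measurable (MM r)"
      using measurable_component_singleton[of i "{0..<r}" "\<lambda>_. lborel"] by simp
    then show "(\<lambda>\<xi>. nu k (\<xi> i)) \<in> borel_measurable (MM r)"
      using nu_meas by (rule measurable_compose)
  qed
  moreover have "indicator (Cc r) \<in> borel_measurable (MM r)"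
    using Cc_sets by (rule borel_measurable_indicator)
  ultimately show ?thesis unfolding H_def[abs_def] by measurable
qed

lemma G_nonneg: "(\<And>i. 0 \<le> x i) \<Longrightarrow> 0 \<le> G r x"
  unfolding G_def gterm_def
proof (subst Min_ge_iff)
  assume x: "\<And>i. 0 \<le> x i"
  show "\<forall>a\<in>(\<lambda>S. (1/2) ^ card S * ((\<Sum>i\<in>S. x i) + 1)) ` Pow {0..<r}. 0 \<le> a"
    using x by (auto intro!: mult_nonneg_nonneg add_nonneg_nonneg sum_nonneg)
qed auto

lemma nu_nonneg: "0 \<le> nu k x"
  unfolding nu_def by (intro sum_nonneg) auto

lemma H_nonneg: "0 \<le> H k r \<xi>"
  unfolding H_def by (intro mult_nonneg_nonneg G_nonneg nu_nonneg) auto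

lemma perm_all:
  fixes \<sigma> :: "nat \<Rightarrow> nat"
  assumes \<sigma>: "\<sigma> permutes {0..<r}"
  shows "(\<forall>i<r. P (\<sigma> i)) \<longleftrightarrow> (\<forall>j<r. P j)"
proof
  assume h: "\<forall>i<r. P (\<sigma> i)"
  show "\<forall>j<r. P j"
  proof (intro allI impI)
    fix j assume j: "j < r"
    have "inv \<sigma> j < r" using perm_lt[OF permutes_inv[OF \<sigma>] j] .
    then have "P (\<sigma> (inv \<sigma> j))" using h by blast
    then show "P j" using \<sigma> by (simp add: permutes_inverses(1))
  qed
next
  assume "\<forall>j<r. P j" then show "\<forall>i<r. P (\<sigma> i)" using perm_lt[OF \<sigma>] by blast
qed

lemma Cc_iff: "\<xi> \<in> space (MM r) \<Longrightarrow> \<xi> \<in> Cc r \<longleftrightarrow> (\<forall>j<r. 0 \<le> \<xi> j \<and> \<xi> j < 1)"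
  unfolding Cc_def space_MM by (auto simp: PiE_iff)

lemma TT_space: "TT r \<sigma> \<xi> \<in> space (MM r)"
  unfolding TT_def space_MM by auto

lemma H_sym:
  assumes \<sigma>: "\<sigma> permutes {0..<r}" and \<xi>: "\<xi> \<in> space (MM r)"
  shows "H k r (TT r \<sigma> \<xi>) = H k r \<xi>"
proof -
  have "TT r \<sigma> \<xi> \<in> Cc r \<longleftrightarrow> (\<forall>i<r. 0 \<le> \<xi> (\<sigma> i) \<and> \<xi> (\<sigma> i) < 1)"
    using Cc_iff[OF TT_space] by (simp add: TT_def)
  also have "\<dots> \<longleftrightarrow> (\<forall>j<r. 0 \<le> \<xi> j \<and> \<xi> j < 1)"
    by (rule perm_all[OF \<sigma>])
  also have "\<dots> \<longleftrightarrow> \<xi> \<in> Cc r" using Cc_iff[OF \<xi>] by simp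
  finally have c: "TT r \<sigma> \<xi> \<in> Cc r \<longleftrightarrow> \<xi> \<in> Cc r" .
  have "G r (\<lambda>i. nu k (TT r \<sigma> \<xi> i)) = G r ((\<lambda>i. nu k (\<xi> i)) \<circ> \<sigma>)"
    by (rule G_cong) (simp add: TT_def)
  also have "\<dots> = G r (\<lambda>i. nu k (\<xi> i))" by (rule G_perm[OF \<sigma>])
  finally show ?thesis unfolding H_def using c by (simp add: indicator_def)
qed

lemma perm_bound:
  "(\<integral>\<^sup>+ \<xi>. ennreal (H k r \<xi>) \<partial>MM r)
     \<le> of_nat (fact r) * (\<integral>\<^sup>+ \<xi>. ennreal (H k r \<xi> * indicator (Omega r) \<xi>) \<partial>MM r)"
proof -
  define P where "P = {\<sigma>. \<sigma> permutes {0..<r::nat}}"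
  define f where "f \<xi> = ennreal (H k r \<xi> * indicator (Omega r) \<xi>)" for \<xi>
  have finP: "finite P" unfolding P_def by (rule finite_permutations) simp
  have cardP: "card P = fact r" unfolding P_def by (rule card_permutations) simp_all
  have fmeas: "f \<in> borel_measurable (MM r)"
    unfolding f_def using H_meas Omega_sets by measurable
  have pt: "ennreal (H k r \<xi>) \<le> (\<Sum>\<sigma>\<in>P. f (TT r \<sigma> \<xi>))" if \<xi>: "\<xi> \<in> space (MM r)" for \<xi>
  proof (cases "\<xi> \<in> Cc r")
    case False then show ?thesis by (simp add: H_def)
  next
    case True
    obtain \<sigma> where \<sigma>: "\<sigma> permutes {0..<r}" and srt: "\<forall>i j. i \<le> j \<and> j < r \<longrightarrow> \<xi> (\<sigma> i) \<le> \<xi> (\<sigma> j)"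
      using sort_perm by blast
    have b: "0 \<le> \<xi> j \<and> \<xi> j < 1" if "j < r" for j using True Cc_iff[OF \<xi>] that by auto
    have "TT r \<sigma> \<xi> \<in> Omega r"
      unfolding Omega_def
    proof (intro CollectI conjI allI impI)
      show "TT r \<sigma> \<xi> \<in> {0..<r} \<rightarrow>\<^sub>E UNIV" unfolding TT_def by auto
      fix i assume i: "i < r"
      have "\<sigma> i < r" by (rule perm_lt[OF \<sigma> i])
      then show "0 \<le> TT r \<sigma> \<xi> i" "TT r \<sigma> \<xi> i \<le> 1" using b i by (auto simp: TT_def less_imp_le)
    next
      fix i j assume "i \<le> j \<and> j < r"
      then show "TT r \<sigma> \<xi> i \<le> TT r \<sigma> \<xi> j" using srt by (auto simp: TT_def)
    qed
    then have "f (TT r \<sigma> \<xi>) = ennreal (H k r \<xi>)"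
      unfolding f_def using H_sym[OF \<sigma> \<xi>] by simp
    moreover have "f (TT r \<sigma> \<xi>) \<le> (\<Sum>\<sigma>\<in>P. f (TT r \<sigma> \<xi>))"
      using finP \<sigma> unfolding P_def by (intro member_le_sum) auto
    ultimately show ?thesis by simp
  qed
  have "(\<integral>\<^sup>+ \<xi>. ennreal (H k r \<xi>) \<partial>MM r) \<le> (\<integral>\<^sup>+ \<xi>. (\<Sum>\<sigma>\<in>P. f (TT r \<sigma> \<xi>)) \<partial>MM r)"
    by (intro nn_integral_mono pt)
  also have "\<dots> = (\<Sum>\<sigma>\<in>P. \<integral>\<^sup>+ \<xi>. f (TT r \<sigma> \<xi>) \<partial>MM r)"
  proof (rule nn_integral_sum)
    fix \<sigma> assume "\<sigma> \<in> P"
    then have "TT r \<sigma> \<in> measurable (MM r) (MM r)" unfolding P_def by (intro TT_meas) auto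
    then show "(\<lambda>\<xi>. f (TT r \<sigma> \<xi>)) \<in> borel_measurable (MM r)"
      using fmeas by (rule measurable_compose)
  qed
  also have "\<dots> = (\<Sum>\<sigma>\<in>P. \<integral>\<^sup>+ \<xi>. f \<xi> \<partial>MM r)"
  proof (rule sum.cong[OF refl])
    fix \<sigma> assume "\<sigma> \<in> P"
    then have \<sigma>: "\<sigma> permutes {0..<r}" unfolding P_def by auto
    have "(\<integral>\<^sup>+ \<xi>. f \<xi> \<partial>MM r) = (\<integral>\<^sup>+ \<xi>. f \<xi> \<partial>distr (MM r) (MM r) (TT r \<sigma>))"
      by (simp add: distr_TT[OF \<sigma>])
    also have "\<dots> = (\<integral>\<^sup>+ \<xi>. f (TT r \<sigma> \<xi>) \<partial>MM r)"
      using TT_meas[OF \<sigma>] fmeas by (intro nn_integral_distr) auto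
    finally show "(\<integral>\<^sup>+ \<xi>. f (TT r \<sigma> \<xi>) \<partial>MM r) = (\<integral>\<^sup>+ \<xi>. f \<xi> \<partial>MM r)" by simp
  qed
  also have "\<dots> = of_nat (fact r) * (\<integral>\<^sup>+ \<xi>. f \<xi> \<partial>MM r)"
    using cardP by simp
  finally show ?thesis unfolding f_def .
qed



definition mybox :: "nat \<Rightarrow> nat \<Rightarrow> (nat \<Rightarrow> nat) \<Rightarrow> (nat \<Rightarrow> real) set" where
  "mybox k r a = Pi\<^sub>E {0..<r} (\<lambda>i. J k (a i))"

lemma box_sets: "mybox k r a \<in> sets (MM r)"
  unfolding mybox_def J_def by (intro sets_PiM_I_finite) auto

lemma box_measure:
  assumes k: "k \<ge> 1" and a: "a \<in> {0..<r} \<rightarrow>\<^sub>E {1..k}"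
  shows "emeasure (MM r) (mybox k r a) = ennreal (\<Prod>i\<in>{0..<r}. 1 / (real (a i) * Defs.harm k))"
proof -
  have a1: "a i \<ge> 1" if "i \<in> {0..<r}" for i using a that by (auto simp: PiE_iff)
  have "emeasure (MM r) (mybox k r a) = (\<Prod>i\<in>{0..<r}. emeasure lborel (J k (a i)))"
    unfolding mybox_def by (rule emeasure_MM_box) (simp add: J_def)
  also have "\<dots> = (\<Prod>i\<in>{0..<r}. ennreal (1 / (real (a i) * Defs.harm k)))"
    using a1 J_measure[OF k] by (intro prod.cong) auto
  also have "\<dots> = ennreal (\<Prod>i\<in>{0..<r}. 1 / (real (a i) * Defs.harm k))"
    using harm_pos'[OF k] by (intro prod_ennreal) simp
  finally show ?thesis .
qed

lemma lower_bound:
  assumes k: "k \<ge> 1"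
  shows "(\<Sum>a\<in>{0..<r} \<rightarrow>\<^sub>E {1..k}. ennreal (G r (\<lambda>i. real (a i))) * emeasure (MM r) (mybox k r a))
         \<le> (\<integral>\<^sup>+ \<xi>. ennreal (H k r \<xi>) \<partial>MM r)"
proof -
  let ?A = "{0..<r} \<rightarrow>\<^sub>E {1..k}"
  have finA: "finite ?A" by (intro finite_PiE) auto
  have pw: "(\<Sum>a\<in>?A. ennreal (G r (\<lambda>i. real (a i))) * indicator (mybox k r a) \<xi>) \<le> ennreal (H k r \<xi>)" for \<xi>
  proof (cases "\<exists>a0\<in>?A. \<xi> \<in> mybox k r a0")
    case False
    then have "(\<Sum>a\<in>?A. ennreal (G r (\<lambda>i. real (a i))) * indicator (mybox k r a) \<xi>) = 0"
      by (intro sum.neutral) auto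
    then show ?thesis by simp
  next
    case True
    then obtain a0 where a0: "a0 \<in> ?A" "\<xi> \<in> mybox k r a0" by blast
    have a01: "a0 i \<in> {1..k}" if "i < r" for i using a0(1) that by (auto simp: PiE_iff)
    have xi: "\<xi> i \<in> J k (a0 i)" if "i < r" for i using a0(2) that unfolding mybox_def by (auto simp: PiE_iff)
    have uniq: "a = a0" if a: "a \<in> ?A" "\<xi> \<in> mybox k r a" for a
    proof
      fix i show "a i = a0 i"
      proof (cases "i < r")
        case True
        have "\<xi> i \<in> J k (a i)" using a(2) True unfolding mybox_def by (auto simp: PiE_iff)
        moreover have "a i \<ge> 1" using a(1) True by (auto simp: PiE_iff)
        ultimately show ?thesis using J_disj[OF k _ xi[OF True]] a01[OF True] by auto
      next
        case False
        then have "i \<notin> {0..<r}" by simp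
        then show ?thesis using PiE_arb[OF a(1)] PiE_arb[OF a0(1)] by simp
      qed
    qed
    have inC: "\<xi> \<in> Cc r"
    proof -
      have "\<xi> i \<in> {0..<1}" if "i < r" for i
      proof -
        have "J k (a0 i) \<subseteq> {0..<1}" using J_sub[OF k] a01[OF that] by auto
        then show ?thesis using xi[OF that] by blast
      qed
      moreover have "\<xi> \<in> {0..<r} \<rightarrow>\<^sub>E UNIV" using a0(2) unfolding mybox_def by (auto simp: PiE_iff)
      ultimately show ?thesis unfolding Cc_def by (auto simp: PiE_iff)
    qed
    have nua: "nu k (\<xi> i) = real (a0 i)" if "i < r" for i
      using nu_eq[OF k xi[OF that] a01[OF that]] .
    have "(\<Sum>a\<in>?A. ennreal (G r (\<lambda>i. real (a i))) * indicator (mybox k r a) \<xi>)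
          = (\<Sum>a\<in>?A. if a = a0 then ennreal (G r (\<lambda>i. real (a0 i))) else 0)"
    proof (rule sum.cong[OF refl])
      fix a assume aA: "a \<in> ?A"
      have "a \<noteq> a0 \<Longrightarrow> \<xi> \<notin> mybox k r a" using uniq[OF aA] by blast
      then show "ennreal (G r (\<lambda>i. real (a i))) * indicator (mybox k r a) \<xi> = (if a = a0 then ennreal (G r (\<lambda>i. real (a0 i))) else 0)"
        using a0(2) by (cases "a = a0") (simp_all add: indicator_def)
    qed
    also have "\<dots> = ennreal (G r (\<lambda>i. real (a0 i)))" using finA a0(1) by (simp add: sum.delta)
    also have "G r (\<lambda>i. real (a0 i)) = G r (\<lambda>i. nu k (\<xi> i))"
      using nua by (intro G_cong) simp
    also have "G r (\<lambda>i. nu k (\<xi> i)) = H k r \<xi>" using inC by (simp add: H_def)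
    finally show ?thesis by simp
  qed
  have "(\<Sum>a\<in>?A. ennreal (G r (\<lambda>i. real (a i))) * emeasure (MM r) (mybox k r a))
        = (\<Sum>a\<in>?A. \<integral>\<^sup>+ \<xi>. ennreal (G r (\<lambda>i. real (a i))) * indicator (mybox k r a) \<xi> \<partial>MM r)"
    using box_sets by (intro sum.cong refl) (simp add: nn_integral_cmult_indicator)
  also have "\<dots> = (\<integral>\<^sup>+ \<xi>. (\<Sum>a\<in>?A. ennreal (G r (\<lambda>i. real (a i))) * indicator (mybox k r a) \<xi>) \<partial>MM r)"
  proof (intro nn_integral_sum[symmetric])
    fix a show "(\<lambda>\<xi>. ennreal (G r (\<lambda>i. real (a i))) * indicator (mybox k r a) \<xi>) \<in> borel_measurable (MM r)"
      using box_sets[of k r a] by (intro borel_measurable_times_ennreal borel_measurable_const borel_measurable_indicator)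
  qed
  also have "\<dots> \<le> (\<integral>\<^sup>+ \<xi>. ennreal (H k r \<xi>) \<partial>MM r)"
    by (intro nn_integral_mono pw)
  finally show ?thesis .
qed

lemma minfun_nonneg: "0 \<le> minfun k r \<xi>"
  unfolding minfun_def
  by (subst Min_ge_iff) (auto intro!: mult_nonneg_nonneg add_nonneg_nonneg sum_nonneg)

lemma minfun_le1: "minfun k r \<xi> \<le> 1"
proof -
  have "minfun k r \<xi> \<le> (1/2) ^ 0 * ((\<Sum>i<0. real k powr \<xi> i) + 1)"
    unfolding minfun_def by (intro Min_le finite_imageI imageI) auto
  then show ?thesis by simp
qed

lemma G_le_minfun:
  assumes k: "k \<ge> 1" and \<xi>: "\<xi> \<in> Omega r"
  shows "G r (\<lambda>i. nu k (\<xi> i)) \<le> exp 1 * minfun k r \<xi>"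
proof -
  have "minfun k r \<xi> \<in> (\<lambda>j. (1/2) ^ j * ((\<Sum>i<j. real k powr \<xi> i) + 1)) ` {0..r}"
    unfolding minfun_def by (intro Min_in) auto
  then obtain j where j: "j \<le> r" and m: "minfun k r \<xi> = (1/2) ^ j * ((\<Sum>i<j. real k powr \<xi> i) + 1)"
    by auto
  have x0: "0 \<le> \<xi> i" if "i < j" for i using \<xi> that j unfolding Omega_def by auto
  have "G r (\<lambda>i. nu k (\<xi> i)) \<le> gterm (\<lambda>i. nu k (\<xi> i)) {0..<j}"
    using j by (intro G_le) auto
  also have "\<dots> = (1/2) ^ j * ((\<Sum>i<j. nu k (\<xi> i)) + 1)"
    unfolding gterm_def by (simp add: atLeast0LessThan)
  also have "\<dots> \<le> (1/2) ^ j * ((\<Sum>i<j. exp 1 * real k powr \<xi> i) + 1)"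
    using nu_bound[OF k] x0 by (intro mult_left_mono add_right_mono sum_mono) auto
  also have "\<dots> \<le> (1/2) ^ j * (exp 1 * ((\<Sum>i<j. real k powr \<xi> i) + 1))"
  proof -
    have "1 \<le> exp (1::real)" by simp
    then have "(\<Sum>i<j. exp 1 * real k powr \<xi> i) + 1 \<le> exp 1 * ((\<Sum>i<j. real k powr \<xi> i) + 1)"
      by (simp add: sum_distrib_left[symmetric] algebra_simps)
    then show ?thesis by (intro mult_left_mono) auto
  qed
  also have "\<dots> = exp 1 * minfun k r \<xi>" using m by simp
  finally show ?thesis .
qed

lemma omega_bound:
  assumes k: "k \<ge> 1"
  shows "(\<integral>\<^sup>+ \<xi>. ennreal (H k r \<xi> * indicator (Omega r) \<xi>) \<partial>MM r)
         \<le> ennreal (exp 1) * (\<integral>\<^sup>+ \<xi>. ennreal (indicator (Omega r) \<xi> * minfun k r \<xi>) \<partial>MM r)"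
proof -
  have pw: "H k r \<xi> * indicator (Omega r) \<xi> \<le> exp 1 * (indicator (Omega r) \<xi> * minfun k r \<xi>)" for \<xi>
  proof (cases "\<xi> \<in> Omega r \<and> \<xi> \<in> Cc r")
    case True
    then show ?thesis using G_le_minfun[OF k, of \<xi>] by (simp add: H_def)
  next
    case False
    then have z: "H k r \<xi> * indicator (Omega r) \<xi> = 0" by (auto simp: H_def)
    moreover have "0 \<le> exp 1 * (indicator (Omega r) \<xi> * minfun k r \<xi>)"
      using minfun_nonneg[of k r \<xi>] by simp
    ultimately show ?thesis by (simp only: z)
  qed
  have "(\<integral>\<^sup>+ \<xi>. ennreal (H k r \<xi> * indicator (Omega r) \<xi>) \<partial>MM r)
        \<le> (\<integral>\<^sup>+ \<xi>. ennreal (exp 1) * ennreal (indicator (Omega r) \<xi> * minfun k r \<xi>) \<partial>MM r)"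
  proof (intro nn_integral_mono)
    fix \<xi>
    have "ennreal (H k r \<xi> * indicator (Omega r) \<xi>) \<le> ennreal (exp 1 * (indicator (Omega r) \<xi> * minfun k r \<xi>))"
      using pw by (rule ennreal_leI)
    also have "\<dots> = ennreal (exp 1) * ennreal (indicator (Omega r) \<xi> * minfun k r \<xi>)"
      by (rule ennreal_mult') simp
    finally show "ennreal (H k r \<xi> * indicator (Omega r) \<xi>) \<le> ennreal (exp 1) * ennreal (indicator (Omega r) \<xi> * minfun k r \<xi>)" .
  qed
  also have "\<dots> = ennreal (exp 1) * (\<integral>\<^sup>+ \<xi>. ennreal (indicator (Omega r) \<xi> * minfun k r \<xi>) \<partial>MM r)"
  proof (intro nn_integral_cmult)
    have m: "(\<lambda>\<xi>. indicator (Omega r) \<xi> * minfun k r \<xi>) \<in> borel_measurable (MM r)"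
      using borel_measurable_times[OF borel_measurable_indicator[OF Omega_sets] minfun_meas] .
    then show "(\<lambda>\<xi>. ennreal (indicator (Omega r) \<xi> * minfun k r \<xi>)) \<in> borel_measurable (MM r)"
      by simp
  qed
  finally show ?thesis .
qed



lemma N_finite:
  "(\<integral>\<^sup>+ \<xi>. ennreal (indicator (Omega r) \<xi> * minfun k r \<xi>) \<partial>MM r) < \<infinity>"
proof -
  have "(\<integral>\<^sup>+ \<xi>. ennreal (indicator (Omega r) \<xi> * minfun k r \<xi>) \<partial>MM r)
        \<le> (\<integral>\<^sup>+ \<xi>. indicator (Omega r) \<xi> \<partial>MM r)"
  proof (intro nn_integral_mono)
    fix \<xi>
    show "ennreal (indicator (Omega r) \<xi> * minfun k r \<xi>) \<le> indicator (Omega r) \<xi>"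
      using minfun_le1[of k r \<xi>] by (cases "\<xi> \<in> Omega r") auto
  qed
  also have "\<dots> = emeasure (MM r) (Omega r)" using Omega_sets by simp
  also have "\<dots> \<le> emeasure (MM r) (Pi\<^sub>E {0..<r} (\<lambda>_. {0..1}))"
    by (intro emeasure_mono sets_PiM_I_finite) (auto simp: Omega_def PiE_iff extensional_def)
  also have "\<dots> = 1" by (subst emeasure_MM_box) auto
  finally show ?thesis by (simp add: le_less_trans)
qed

lemma main_bound:
  assumes k: "k \<ge> 1"
  shows "(\<Sum>a\<in>{0..<r} \<rightarrow>\<^sub>E {1..k}. real (card (subset_sums r a)) / (\<Prod>i<r. real (a i)))
     \<le> exp 1 * (2 * Defs.harm k) ^ r * fact r *
        (\<integral>\<xi>. indicator (Omega r) \<xi> * minfun k r \<xi> \<partial>(\<Pi>\<^sub>M i\<in>{0..<r}. lborel))"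
proof -
  let ?A = "{0..<r} \<rightarrow>\<^sub>E {1..k}"
  let ?h = "Defs.harm k"
  define N where "N = (\<integral>\<^sup>+ \<xi>. ennreal (indicator (Omega r) \<xi> * minfun k r \<xi>) \<partial>MM r)"
  define I where "I = (\<integral>\<xi>. indicator (Omega r) \<xi> * minfun k r \<xi> \<partial>MM r)"
  define S where "S = (\<Sum>a\<in>?A. G r (\<lambda>i. real (a i)) / (\<Prod>i<r. real (a i)))"
  have hpos: "?h > 0" using harm_pos'[OF k] .
  have m: "(\<lambda>\<xi>. indicator (Omega r) \<xi> * minfun k r \<xi>) \<in> borel_measurable (MM r)"
    using borel_measurable_times[OF borel_measurable_indicator[OF Omega_sets] minfun_meas] .
  have IN: "I = enn2real N"
    unfolding I_def N_def using m minfun_nonneg by (intro integral_eq_nn_integral) auto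
  have Nfin: "N < \<infinity>" unfolding N_def by (rule N_finite)
  have Neq: "N = ennreal I" using IN Nfin by simp
  have I0: "0 \<le> I" using IN by simp
  have Gnn: "0 \<le> G r (\<lambda>i. real (a i))" for a :: "nat \<Rightarrow> nat" by (intro G_nonneg) auto
  have tm: "ennreal (G r (\<lambda>i. real (a i)) / (\<Prod>i<r. real (a i)))
      = ennreal (?h ^ r) * (ennreal (G r (\<lambda>i. real (a i))) * emeasure (MM r) (mybox k r a))"
    if a: "a \<in> ?A" for a
  proof -
    have apos: "0 < real (a i)" if "i \<in> {0..<r}" for i
    proof -
      have "a i \<ge> 1" using a that by (auto simp: PiE_iff)
      then show ?thesis by simp
    qed
    have P: "(\<Prod>i\<in>{0..<r}. 1 / (real (a i) * ?h)) = 1 / ((\<Prod>i<r. real (a i)) * ?h ^ r)"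
      by (simp add: prod_dividef prod.distrib atLeast0LessThan)
    have Pp: "0 < (\<Prod>i<r. real (a i))" using apos by (intro prod_pos) (auto simp: atLeast0LessThan)
    have "G r (\<lambda>i. real (a i)) / (\<Prod>i<r. real (a i))
          = ?h ^ r * (G r (\<lambda>i. real (a i)) * (\<Prod>i\<in>{0..<r}. 1 / (real (a i) * ?h)))"
      unfolding P using hpos Pp by (simp add: field_simps)
    also have "ennreal \<dots> = ennreal (?h ^ r) * (ennreal (G r (\<lambda>i. real (a i))) * ennreal (\<Prod>i\<in>{0..<r}. 1 / (real (a i) * ?h)))"
      using hpos Gnn[of a] apos
      by (simp add: ennreal_mult prod_nonneg less_imp_le)
    finally show ?thesis using box_measure[OF k a] by simp
  qed
  have "ennreal S = (\<Sum>a\<in>?A. ennreal (G r (\<lambda>i. real (a i)) / (\<Prod>i<r. real (a i))))"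
    unfolding S_def using Gnn
    by (intro sum_ennreal[symmetric] divide_nonneg_nonneg prod_nonneg) auto
  also have "\<dots> = ennreal (?h ^ r) * (\<Sum>a\<in>?A. ennreal (G r (\<lambda>i. real (a i))) * emeasure (MM r) (mybox k r a))"
    using tm by (simp add: sum_distrib_left)
  also have "\<dots> \<le> ennreal (?h ^ r) * (\<integral>\<^sup>+ \<xi>. ennreal (H k r \<xi>) \<partial>MM r)"
    by (intro mult_left_mono lower_bound[OF k]) auto
  also have "\<dots> \<le> ennreal (?h ^ r) * (of_nat (fact r) * (ennreal (exp 1) * N))"
  proof (intro mult_left_mono)
    have "(\<integral>\<^sup>+ \<xi>. ennreal (H k r \<xi>) \<partial>MM r) \<le> of_nat (fact r) * (\<integral>\<^sup>+ \<xi>. ennreal (H k r \<xi> * indicator (Omega r) \<xi>) \<partial>MM r)"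
      by (rule perm_bound[where k=k and r=r])
    also have "\<dots> \<le> of_nat (fact r) * (ennreal (exp 1) * N)"
      unfolding N_def by (intro mult_left_mono omega_bound[OF k]) auto
    finally show "(\<integral>\<^sup>+ \<xi>. ennreal (H k r \<xi>) \<partial>MM r) \<le> of_nat (fact r) * (ennreal (exp 1) * N)" .
  qed auto
  also have "\<dots> = ennreal (?h ^ r * fact r * exp 1 * I)"
    unfolding Neq using hpos I0
    by (simp add: ennreal_mult ennreal_of_nat_eq_real_of_nat mult.assoc)
  finally have SI: "S \<le> ?h ^ r * fact r * exp 1 * I"
    using hpos I0 by (subst (asm) ennreal_le_iff) auto
  have "(\<Sum>a\<in>?A. real (card (subset_sums r a)) / (\<Prod>i<r. real (a i)))
        \<le> (\<Sum>a\<in>?A. 2 ^ r * (G r (\<lambda>i. real (a i)) / (\<Prod>i<r. real (a i))))"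
  proof (rule sum_mono)
    fix a assume a: "a \<in> ?A"
    have "0 \<le> (\<Prod>i<r. real (a i))" by (intro prod_nonneg) auto
    then have "real (card (subset_sums r a)) / (\<Prod>i<r. real (a i)) \<le> 2 ^ r * G r (\<lambda>i. real (a i)) / (\<Prod>i<r. real (a i))"
      using card_le_G by (intro divide_right_mono) auto
    then show "real (card (subset_sums r a)) / (\<Prod>i<r. real (a i)) \<le> 2 ^ r * (G r (\<lambda>i. real (a i)) / (\<Prod>i<r. real (a i)))"
      by simp
  qed
  also have "\<dots> = 2 ^ r * S" unfolding S_def by (simp add: sum_distrib_left)
  also have "\<dots> \<le> 2 ^ r * (?h ^ r * fact r * exp 1 * I)" using SI by simp
  also have "\<dots> = exp 1 * (2 * ?h) ^ r * fact r * I" by (simp add: power_mult_distrib)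
  finally show ?thesis unfolding I_def .
qed

theorem lemma5p1:
  "\<exists>C::real. C > 0 \<and> (\<forall>k r::nat. k \<ge> 1 \<longrightarrow> r \<ge> 1 \<longrightarrow>
     (\<Sum>a\<in>{0..<r} \<rightarrow>\<^sub>E {1..k}. real (card (subset_sums r a)) / (\<Prod>i<r. real (a i)))
     \<le> C * (2 * harm k) ^ r * fact r *
        (\<integral>\<xi>. indicator (Omega r) \<xi> * minfun k r \<xi> \<partial>(\<Pi>\<^sub>M i\<in>{0..<r}. lborel)))"
  using main_bound by (intro exI[of _ "exp 1"]) auto


end
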